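(* Under the assumptions of the setting below, let $\alpha\in\mathbb{C}$ with $|\alpha|\le 1$, $\alpha\notin\{0,1\}$, be a root of $G_X(s)G_{c\theta}(1/s)=1$, and let $$P(s)=\sum_{i=0}^{m-1}\pi_i\sum_{j=0}^{m-i-1}s^{j+i}F(-m+j).$$ Then $P(\alpha)=0$. Moreover, if $r\in\{1,\dots,m-1\}$ is the multiplicity of the root $\alpha$, then $P^{(n)}(\alpha)=0$ for all $n\in\{0,1,\dots,r-1\}$.
   Context: $X$ and $c\theta$ ($c>0$) are independent, non-negative, integer-valued random variables with $\mathbb{P}(c\theta\le m)=1$ for some $m\in\mathbb{N}$, and the net profit condition $c\,\mathbb{E}\theta-\mathbb{E}X>0$ holds. $X_1,X_2,\dots$ and $\theta_1,\theta_2,\dots$ are i.i.d. copies of $X$ and $\theta$, all mutually independent. $\mathcal M=\big(\sup_{n\ge1}\sum_{i=1}^n(X_i-c\theta_i)\big)^+$, $\pi_i=\mathbb{P}(\mathcal M=i)$. For a non-negative integer-valued $Z$, $G_Z(s)=\sum_k\mathbb{P}(Z=k)s^k$. For $j\in\mathbb{Z}$, $F(j)=\mathbb{P}(X-c\theta\le j)$. *)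

theory Defs
  imports "HOL-Probability.Probability"
begin

definition pgf :: "'a measure \<Rightarrow> ('a \<Rightarrow> real) \<Rightarrow> complex \<Rightarrow> complex" where
  "pgf M Z s = (\<Sum>k. complex_of_real (measure M {\<omega> \<in> space M. Z \<omega> = real k}) * s ^ k)"

text \<open>The random variable (sup_{n>=1} sum_{i=1}^n (X_i - c theta_i))^+, as an extended real;
  copies are indexed from 0, so the n-th partial sum is the sum over i < n.\<close>
definition walk_sup :: "(nat \<Rightarrow> 'a \<Rightarrow> nat) \<Rightarrow> real \<Rightarrow> (nat \<Rightarrow> 'a \<Rightarrow> real) \<Rightarrow> 'a \<Rightarrow> ereal" where
  "walk_sup X c \<theta> \<omega> =
     max 0 (SUP n\<in>{1..}. ereal (\<Sum>i<n. real (X i \<omega>) - c * \<theta> i \<omega>))"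

definition higher_derivs_within ::
  "(complex \<Rightarrow> complex) \<Rightarrow> complex set \<Rightarrow> nat \<Rightarrow> (nat \<Rightarrow> complex \<Rightarrow> complex) \<Rightarrow> bool" where
  "higher_derivs_within f S n ds \<longleftrightarrow>
     (\<forall>z\<in>S. ds 0 z = f z) \<and>
     (\<forall>k<n. \<forall>z\<in>S. (ds k has_field_derivative ds (Suc k) z) (at z within S))"

definition root_multiplicity_disc :: "(complex \<Rightarrow> complex) \<Rightarrow> complex \<Rightarrow> nat \<Rightarrow> bool" where
  "root_multiplicity_disc f \<alpha> r \<longleftrightarrow>
     (\<exists>\<epsilon>>0. \<exists>ds. higher_derivs_within f (cball 0 1 \<inter> ball \<alpha> \<epsilon>) r ds \<and>
        (\<forall>k<r. ds k \<alpha> = 0) \<and> ds r \<alpha> \<noteq> 0)"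

definition Ppoly :: "nat \<Rightarrow> (nat \<Rightarrow> real) \<Rightarrow> (int \<Rightarrow> real) \<Rightarrow> complex \<Rightarrow> complex" where
  "Ppoly m \<pi> F s = (\<Sum>i<m. complex_of_real (\<pi> i) *
      (\<Sum>j<m - i. s ^ (j + i) * complex_of_real (F (- int m + int j))))"

end

theory Submission
  imports Defs "HOL-Complex_Analysis.Complex_Analysis"
begin


lemma bound_from_derivs:
  fixes f :: "complex \<Rightarrow> complex"
  assumes hd: "higher_derivs_within f S r ds" and cS: "convex S" and aS: "\<alpha> \<in> S"
    and z0: "\<forall>k<r. ds k \<alpha> = 0" and r: "r > 0"
  obtains K \<delta> where "\<delta> > 0" "\<And>z. z \<in> S \<Longrightarrow> norm (z-\<alpha>) < \<delta> \<Longrightarrow> norm (f z) \<le> K * norm (z-\<alpha>)^r"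
proof -
  have hd0: "\<And>z. z\<in>S \<Longrightarrow> ds 0 z = f z" and
    hd1: "\<And>k z. k < r \<Longrightarrow> z \<in> S \<Longrightarrow> (ds k has_field_derivative ds (Suc k) z) (at z within S)"
    using hd unfolding higher_derivs_within_def by auto
  have "(ds (r-1) has_field_derivative ds r \<alpha>) (at \<alpha> within S)"
    using hd1[of "r-1" \<alpha>] r aS by simp
  then have "((\<lambda>y. (ds (r-1) y - ds (r-1) \<alpha>) / (y - \<alpha>)) \<longlongrightarrow> ds r \<alpha>) (at \<alpha> within S)"
    by (simp add: has_field_derivative_iff)
  then have "((\<lambda>y. norm ((ds (r-1) y - ds (r-1) \<alpha>) / (y - \<alpha>))) \<longlongrightarrow> norm (ds r \<alpha>)) (at \<alpha> within S)"
    by (rule tendsto_norm)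
  then have "eventually (\<lambda>y. norm ((ds (r-1) y - ds (r-1) \<alpha>) / (y - \<alpha>)) < norm (ds r \<alpha>) + 1) (at \<alpha> within S)"
    by (rule order_tendstoD) simp
  then obtain \<delta> where dpos: "\<delta> > 0" and dd: "\<And>y. y \<in> S \<Longrightarrow> y \<noteq> \<alpha> \<Longrightarrow> dist y \<alpha> < \<delta> \<Longrightarrow>
       norm ((ds (r-1) y - ds (r-1) \<alpha>) / (y - \<alpha>)) < norm (ds r \<alpha>) + 1"
    unfolding eventually_at by blast
  define K where "K = norm (ds r \<alpha>) + 1"
  define S' where "S' = S \<inter> ball \<alpha> \<delta>"
  have cS': "convex S'" unfolding S'_def using cS by (simp add: convex_Int)
  have aS': "\<alpha> \<in> S'" unfolding S'_def using aS dpos by simp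
  have claim: "\<forall>z\<in>S'. norm (ds (r-1-j) z) \<le> K * norm (z-\<alpha>)^(j+1)" if "j < r" for j
    using that
  proof (induction j)
    case 0
    show ?case
    proof
      fix z assume z: "z \<in> S'"
      show "norm (ds (r - 1 - 0) z) \<le> K * norm (z - \<alpha>) ^ (0 + 1)"
      proof (cases "z = \<alpha>")
        case True then show ?thesis using z0 r by simp
      next
        case False
        have "norm ((ds (r-1) z - ds (r-1) \<alpha>) / (z - \<alpha>)) < K"
          using dd[of z] z False unfolding S'_def K_def by (auto simp: dist_commute)
        then have "norm (ds (r-1) z) / norm (z-\<alpha>) < K" using z0 r by (simp add: norm_divide)
        then show ?thesis using False by (simp add: divide_less_eq)
      qed
    qed
  next
    case (Suc j)
    define k where "k = r - 1 - Suc j"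
    have kr: "k < r" and sk: "Suc k = r - 1 - j" using Suc.prems unfolding k_def by auto
    show ?case
    proof
      fix z assume z: "z \<in> S'"
      have seg: "closed_segment \<alpha> z \<subseteq> S'" using cS' aS' z by (simp add: closed_segment_subset)
      have "norm (ds k z - ds k \<alpha>) \<le> (K * norm (z-\<alpha>)^(j+1)) * norm (z - \<alpha>)"
      proof (rule field_differentiable_bound[where S="closed_segment \<alpha> z" and f' = "ds (Suc k)"])
        show "convex (closed_segment \<alpha> z)" by simp
        fix w assume w: "w \<in> closed_segment \<alpha> z"
        have wS: "w \<in> S" using seg w unfolding S'_def by auto
        show "(ds k has_field_derivative ds (Suc k) w) (at w within closed_segment \<alpha> z)"
          by (rule has_field_derivative_subset[OF hd1[OF kr wS]]) (use seg S'_def in auto)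
        have "norm (ds (Suc k) w) \<le> K * norm (w-\<alpha>)^(j+1)"
          using Suc.IH[of] Suc.prems seg w sk by auto
        also have "\<dots> \<le> K * norm (z-\<alpha>)^(j+1)"
          by (intro mult_left_mono power_mono segment_bound1[OF w]) (auto simp: K_def)
        finally show "norm (ds (Suc k) w) \<le> K * norm (z-\<alpha>)^(j+1)" .
      qed auto
      then show "norm (ds (r - 1 - Suc j) z) \<le> K * norm (z - \<alpha>) ^ (Suc j + 1)"
        using z0 kr unfolding k_def by (simp add: algebra_simps)
    qed
  qed
  show ?thesis
  proof (rule that[OF dpos])
    fix z assume "z \<in> S" "norm (z - \<alpha>) < \<delta>"
    then have "z \<in> S'" unfolding S'_def by (simp add: dist_norm norm_minus_commute)
    then show "norm (f z) \<le> K * norm (z-\<alpha>)^r"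
      using claim[of "r-1"] r hd0 \<open>z \<in> S\<close> by auto
  qed
qed



lemma analytic_part:
  fixes P Q f :: "complex \<Rightarrow> complex"
  assumes Phol: "P holomorphic_on UNIV"
    and eq: "\<And>s. s \<noteq> 0 \<Longrightarrow> cmod s \<le> 1 \<Longrightarrow> (s - 1) * P s = s^m * Q s * f s"
    and Qb: "\<And>s. s \<noteq> 0 \<Longrightarrow> cmod s \<le> 1 \<Longrightarrow> cmod (Q s) \<le> 1"
    and a1: "cmod \<alpha> \<le> 1" and a2: "\<alpha> \<noteq> 0" and a3: "\<alpha> \<noteq> 1"
    and rm: "root_multiplicity_disc f \<alpha> r"
    and P0: "P \<alpha> = 0"
  shows "\<forall>n<r. (deriv ^^ n) P \<alpha> = 0"
proof (rule ccontr)
  assume "\<not> (\<forall>n<r. (deriv ^^ n) P \<alpha> = 0)"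
  then obtain n where nr: "n < r" and nz: "(deriv ^^ n) P \<alpha> \<noteq> 0" by auto
  define n0 where "n0 = (LEAST n. (deriv ^^ n) P \<alpha> \<noteq> 0)"
  have n0z: "(deriv ^^ n0) P \<alpha> \<noteq> 0" unfolding n0_def by (rule LeastI[of _ n]) (rule nz)
  have n0le: "n0 \<le> n" unfolding n0_def by (rule Least_le) (rule nz)
  have below: "\<And>i. i < n0 \<Longrightarrow> (deriv ^^ i) P \<alpha> = 0" unfolding n0_def using not_less_Least by blast
  have n0pos: "0 < n0" using n0z P0 by (cases n0) auto
  have rpos: "r > 0" using nr by simp
  obtain \<epsilon> ds where epos: "\<epsilon> > 0" and hd: "higher_derivs_within f (cball 0 1 \<inter> ball \<alpha> \<epsilon>) r ds"
    and dz: "\<forall>k<r. ds k \<alpha> = 0"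
    using rm unfolding root_multiplicity_disc_def by (elim exE conjE) simp
  obtain K \<delta> where dpos: "\<delta> > 0" and Kb: "\<And>z. z \<in> cball 0 1 \<inter> ball \<alpha> \<epsilon> \<Longrightarrow> norm (z-\<alpha>) < \<delta> \<Longrightarrow> norm (f z) \<le> K * norm (z-\<alpha>)^r"
  proof -
    have cv: "convex (cball (0::complex) 1 \<inter> ball \<alpha> \<epsilon>)" by (simp add: convex_Int)
    have aS: "\<alpha> \<in> cball 0 1 \<inter> ball \<alpha> \<epsilon>" using epos a1 by simp
    show ?thesis by (rule bound_from_derivs[OF hd cv aS dz rpos]) (rule that)
  qed
  obtain g \<rho> where rpos': "0 < \<rho>" and gh: "g holomorphic_on ball \<alpha> \<rho>"
      and gf: "\<And>w. w \<in> ball \<alpha> \<rho> \<Longrightarrow> P w - P \<alpha> = (w - \<alpha>)^n0 * g w"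
      and gnz: "\<And>w. w \<in> ball \<alpha> \<rho> \<Longrightarrow> g w \<noteq> 0"
  proof -
    have below': "\<And>i. 0 < i \<Longrightarrow> i < n0 \<Longrightarrow> (deriv ^^ i) P \<alpha> = 0" using below by blast
    show ?thesis
      apply (rule holomorphic_factor_order_of_zero[where f=P and S=UNIV and \<xi>=\<alpha> and n=n0])
      apply (rule Phol) apply simp apply simp apply (rule n0pos) apply (rule n0z) apply (rule below'; simp)
      apply (rule that; assumption)
      done
  qed
  define w where "w t = \<alpha> - of_real t * \<alpha>" for t :: real
  define A where "A = cmod \<alpha>"
  define B where "B = cmod (\<alpha> - 1)"
  have Apos: "A > 0" using a2 by (simp add: A_def)
  have Bpos: "B > 0" using a3 by (simp add: B_def)
  define b0 where "b0 = min (1/2) (min (\<epsilon>/(2*A)) (min (\<delta>/(2*A)) (min (\<rho>/(2*A)) (B/(2*A)))))"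
  have b0pos: "b0 > 0" unfolding b0_def using Apos Bpos epos dpos rpos' by auto
  have main: "norm (g (w t)) \<le> (2*K/B) * (t*A)^(r-n0)" if t: "0 < t" "t < b0" for t
  proof -
    have wa: "w t - \<alpha> = - (of_real t * \<alpha>)" by (simp add: w_def)
    have nwa: "norm (w t - \<alpha>) = t * A" unfolding wa A_def using t by (simp add: norm_mult)
    have tA: "t * A < b0 * A" using t Apos by simp
    have bb: "b0 \<le> \<epsilon>/(2*A)" "b0 \<le> \<delta>/(2*A)" "b0 \<le> \<rho>/(2*A)" "b0 \<le> B/(2*A)" "b0 \<le> 1/2"
      unfolding b0_def by auto
    have gen: "t * A < x/2" if "b0 \<le> x/(2*A)" for x
    proof -
      have "b0 * A \<le> x/(2*A) * A" using that Apos by (intro mult_right_mono) auto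
      also have "\<dots> = x/2" using Apos by (simp add: field_simps)
      finally show ?thesis using tA by linarith
    qed
    have tA1: "t * A < \<epsilon>" "t*A < \<delta>" "t * A < \<rho>" "t * A \<le> B/2"
      using gen[OF bb(1)] gen[OF bb(2)] gen[OF bb(3)] gen[OF bb(4)] epos dpos rpos' by auto
    have t1: "t < 1" using t bb(5) by linarith
    have wt: "w t = of_real (1 - t) * \<alpha>" by (simp add: w_def algebra_simps)
    have nw: "norm (w t) = (1-t) * A"
    proof -
      have "norm (w t) = \<bar>1-t\<bar> * A" unfolding wt A_def norm_mult norm_of_real by (rule refl)
      then show ?thesis using t1 by simp
    qed
    have w0: "w t \<noteq> 0" using t1 a2 wt by simp
    have w1: "cmod (w t) \<le> 1" using nw t t1 a1 A_def
    proof -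
      have "(1-t) * A \<le> 1 * 1" using t t1 a1 A_def by (intro mult_mono) auto
      then show ?thesis using nw by simp
    qed
    have inS: "w t \<in> cball 0 1 \<inter> ball \<alpha> \<epsilon>" using w1 nwa tA1 by (auto simp: dist_norm norm_minus_commute)
    have inB: "w t \<in> ball \<alpha> \<rho>" using nwa tA1 by (auto simp: dist_norm norm_minus_commute)
    have fb: "norm (f (w t)) \<le> K * (t*A)^r" using Kb[OF inS] nwa tA1 by simp
    have wm1: "norm (w t - 1) \<ge> B/2"
    proof -
      have "B = norm ((w t - 1) - (w t - \<alpha>))" by (simp add: B_def)
      also have "\<dots> \<le> norm (w t - 1) + norm (w t - \<alpha>)" by (rule norm_triangle_ineq4)
      finally show ?thesis using nwa tA1 by simp
    qed
    have nf0: "norm (f (w t)) \<ge> 0" by simp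
    have q1: "norm (Q (w t)) \<le> 1" by (rule Qb[OF w0 w1])
    have wp: "norm (w t) ^ m \<le> 1" using w1 by (simp add: power_le_one)
    have "norm (w t - 1) * norm (P (w t)) = norm (w t) ^ m * norm (Q (w t)) * norm (f (w t))"
      using eq[OF w0 w1] by (metis norm_mult norm_power)
    also have "\<dots> \<le> norm (f (w t))"
    proof -
      have "norm (w t) ^ m * norm (Q (w t)) \<le> 1" using q1 wp by (simp add: mult_le_one)
      then show ?thesis using nf0 by (simp add: mult_left_le_one_le)
    qed
    finally have c1: "norm (w t - 1) * norm (P (w t)) \<le> K * (t*A)^r" using fb by linarith
    have "(B/2) * norm (P (w t)) \<le> norm (w t - 1) * norm (P (w t))"
      using wm1 by (intro mult_right_mono) auto
    with c1 have "(B/2) * norm (P (w t)) \<le> K * (t*A)^r" by linarith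
    then have Pb: "norm (P (w t)) \<le> (2*K/B) * (t*A)^r" using Bpos by (simp add: field_simps)
    have "norm (P (w t)) = (t*A)^n0 * norm (g (w t))" using gf[OF inB] P0 nwa by (simp add: norm_mult norm_power)
    moreover have "(t*A)^r = (t*A)^n0 * (t*A)^(r-n0)"
      using n0le nr by (simp add: power_add[symmetric])
    ultimately have "(t*A)^n0 * norm (g (w t)) \<le> (t*A)^n0 * ((2*K/B) * (t*A)^(r-n0))"
      using Pb by (simp add: algebra_simps)
    moreover have "(t*A)^n0 > 0" using t Apos by simp
    ultimately show ?thesis by (meson mult_le_cancel_left_pos)
  qed
  have cg: "isCont g \<alpha>"
    using gh rpos' by (metis centre_in_ball holomorphic_on_imp_continuous_on continuous_on_interior interior_ball)
  have lim1: "((\<lambda>t. norm (g (w t))) \<longlongrightarrow> norm (g \<alpha>)) (at_right 0)"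
  proof -
    have "(w \<longlongrightarrow> w 0) (at_right 0)" unfolding w_def by (intro tendsto_intros)
    then have "(w \<longlongrightarrow> \<alpha>) (at_right 0)" by (simp add: w_def)
    then have "((\<lambda>t. g (w t)) \<longlongrightarrow> g \<alpha>) (at_right 0)" using cg by (rule isCont_tendsto_compose[rotated])
    then show ?thesis by (rule tendsto_norm)
  qed
  have lim2: "((\<lambda>t. (2*K/B) * (t*A)^(r-n0)) \<longlongrightarrow> (2*K/B) * (0*A)^(r-n0)) (at_right (0::real))"
    by (intro tendsto_intros)
  have "norm (g \<alpha>) \<le> (2*K/B) * (0*A)^(r-n0)"
  proof (rule tendsto_le[OF _ lim2 lim1])
    show "at_right (0::real) \<noteq> bot" by simp
    show "\<forall>\<^sub>F t in at_right 0. norm (g (w t)) \<le> 2 * K / B * (t * A) ^ (r - n0)"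
      using eventually_at_right_real[OF b0pos] by (rule eventually_mono) (use main in simp)
  qed
  moreover have "(0::real)^(r-n0) = 0" using n0le nr by simp
  ultimately have "g \<alpha> = 0" by simp
  with gnz rpos' show False by simp
qed



lemma (in prob_space) indep_vars_reindex:
  assumes ind: "indep_vars M' X I" and inj: "inj_on f J" and sub: "f ` J \<subseteq> I"
  shows "indep_vars (\<lambda>j. M' (f j)) (\<lambda>j. X (f j)) J"
proof -
  have rv: "\<forall>i\<in>I. random_variable (M' i) (X i)"
    and isd: "indep_sets (\<lambda>i. sigma_sets (space M) {X i -` A \<inter> space M |A. A \<in> sets (M' i)}) I"
    using ind unfolding indep_vars_def by auto
  define G where "G i = sigma_sets (space M) {X i -` A \<inter> space M |A. A \<in> sets (M' i)}" for i
  have "indep_sets (\<lambda>j. G (f j)) J"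
    unfolding indep_sets_def
  proof (intro conjI ballI allI impI)
    fix j assume "j \<in> J"
    then show "G (f j) \<subseteq> events" using isd sub unfolding indep_sets_def G_def by auto
  next
    fix K A assume K: "K \<subseteq> J" "K \<noteq> {}" "finite K" and A: "A \<in> Pi K (\<lambda>j. G (f j))"
    have injK: "inj_on f K" using inj K(1) by (rule inj_on_subset)
    define A' where "A' i = A (the_inv_into K f i)" for i
    have A'f: "A' (f j) = A j" if "j \<in> K" for j
      unfolding A'_def using the_inv_into_f_f[OF injK that] by simp
    have "A' \<in> Pi (f ` K) G" using A A'f by auto
    moreover have "f ` K \<subseteq> I" "f ` K \<noteq> {}" "finite (f ` K)" using K sub by auto
    ultimately have "prob (\<Inter>i\<in>f ` K. A' i) = (\<Prod>i\<in>f ` K. prob (A' i))"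
      using isd unfolding indep_sets_def G_def by blast
    also have "(\<Inter>i\<in>f ` K. A' i) = (\<Inter>j\<in>K. A j)" using A'f by auto
    also have "(\<Prod>i\<in>f ` K. prob (A' i)) = (\<Prod>j\<in>K. prob (A j))"
      using prod.reindex[OF injK, of "\<lambda>i. prob (A' i)"] A'f by simp
    finally show "prob (\<Inter>j\<in>K. A j) = (\<Prod>j\<in>K. prob (A j))" .
  qed
  then show ?thesis unfolding indep_vars_def G_def using rv sub by auto
qed

lemma sup_ints:
  fixes g :: "nat \<Rightarrow> real"
  assumes gi: "\<And>n. g n \<in> \<int>"
  shows "(SUP n\<in>{1..}. ereal (g n)) = \<infinity> \<or> (\<exists>k::int. (SUP n\<in>{1..}. ereal (g n)) = ereal (of_int k))"
proof (cases "(SUP n\<in>{1..}. ereal (g n)) = \<infinity>")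
  case False
  define Sp where "Sp = (SUP n\<in>{1..}. ereal (g n))"
  have "ereal (g 1) \<le> Sp" unfolding Sp_def by (rule SUP_upper) simp
  then have "Sp \<noteq> -\<infinity>" by auto
  with False obtain r where r: "Sp = ereal r" unfolding Sp_def[symmetric] by (cases Sp) auto
  have "ereal (r - 1) < Sp" using r by simp
  then obtain n where n: "n \<in> {1..}" "ereal (r - 1) < ereal (g n)" unfolding Sp_def less_SUP_iff by blast
  have le: "g j \<le> g n" if "j \<in> {1..}" for j
  proof -
    have "ereal (g j) \<le> Sp" unfolding Sp_def using that by (rule SUP_upper)
    then have "g j \<le> r" using r by simp
    then have "g j < g n + 1" using n by simp
    moreover obtain a b where "g j = of_int a" "g n = of_int b" using gi by (meson Ints_cases)
    ultimately show ?thesis by simp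
  qed
  have "Sp = ereal (g n)"
  proof (rule antisym)
    show "Sp \<le> ereal (g n)" unfolding Sp_def by (rule SUP_least) (use le in simp)
    show "ereal (g n) \<le> Sp" unfolding Sp_def using n(1) by (rule SUP_upper)
  qed
  moreover obtain b where "g n = of_int b" using gi by (meson Ints_cases)
  ultimately show ?thesis unfolding Sp_def by auto
qed simp

lemma sup_shift:
  fixes a :: "nat \<Rightarrow> real"
  shows "(SUP n\<in>{1..}. ereal (\<Sum>i<n. a i)) = ereal (a 0) + max 0 (SUP n\<in>{1..}. ereal (\<Sum>i<n. a (Suc i)))"
    (is "?L = _ + max 0 ?U")
proof (rule antisym)
  show "?L \<le> ereal (a 0) + max 0 ?U"
  proof (rule SUP_least)
    fix n :: nat assume n: "n \<in> {1..}"
    then obtain k where k: "n = Suc k" by (cases n) auto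
    have eq: "(\<Sum>i<n. a i) = a 0 + (\<Sum>i<k. a (Suc i))" unfolding k by (rule sum.lessThan_Suc_shift)
    show "ereal (\<Sum>i<n. a i) \<le> ereal (a 0) + max 0 ?U"
    proof (cases k)
      case 0
      then show ?thesis using eq by (simp add: ereal_le_add_self)
    next
      case (Suc k')
      have "ereal (\<Sum>i<k. a (Suc i)) \<le> ?U" by (rule SUP_upper) (simp add: Suc)
      then have "ereal (\<Sum>i<k. a (Suc i)) \<le> max 0 ?U" using max.coboundedI2 by blast
      then have "ereal (a 0) + ereal (\<Sum>i<k. a (Suc i)) \<le> ereal (a 0) + max 0 ?U"
        by (rule add_left_mono)
      then show ?thesis using eq by simp
    qed
  qed
next
  have t1: "ereal (a 0) \<le> ?L"
  proof -
    have "ereal (\<Sum>i<1. a i) \<le> ?L" by (rule SUP_upper) simp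
    then show ?thesis by simp
  qed
  have t2: "ereal (a 0) + ?U \<le> ?L"
  proof -
    have "ereal (a 0) + ?U = (SUP n\<in>{1..}. ereal (a 0) + ereal (\<Sum>i<n. a (Suc i)))"
      by (rule SUP_ereal_add_right[symmetric]) auto
    also have "\<dots> \<le> ?L"
    proof (rule SUP_least)
      fix n :: nat assume "n \<in> {1..}"
      have "ereal (a 0) + ereal (\<Sum>i<n. a (Suc i)) = ereal (\<Sum>i<Suc n. a i)"
        by (simp only: sum.lessThan_Suc_shift plus_ereal.simps)
      also have "\<dots> \<le> ?L" by (rule SUP_upper) simp
      finally show "ereal (a 0) + ereal (\<Sum>i<n. a (Suc i)) \<le> ?L" .
    qed
    finally show ?thesis .
  qed
  show "ereal (a 0) + max 0 ?U \<le> ?L"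
  proof (cases "?U \<le> 0")
    case True then show ?thesis using t1 by (simp add: max_def)
  next
    case False then have "max 0 ?U = ?U" by (simp add: max_def)
    then show ?thesis using t2 by simp
  qed
qed



locale walk_setup = prob_space M for M :: "'a measure" +
  fixes X :: "nat \<Rightarrow> 'a \<Rightarrow> nat" and \<theta> :: "nat \<Rightarrow> 'a \<Rightarrow> real" and c :: real and m :: nat
  assumes Xm: "\<And>i. X i \<in> measurable M (count_space UNIV)"
    and \<theta>m: "\<And>i. \<theta> i \<in> borel_measurable M"
    and cpos: "c > 0"
    and cnat: "\<And>i \<omega>. \<omega> \<in> space M \<Longrightarrow> c * \<theta> i \<omega> \<in> \<nat>"
    and ind: "indep_vars (\<lambda>_. borel) (\<lambda>k \<omega>. case k of Inl i \<Rightarrow> real (X i \<omega>) | Inr i \<Rightarrow> \<theta> i \<omega>) UNIV"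
    and Xd: "\<And>i. distr M (count_space UNIV) (X i) = distr M (count_space UNIV) (X 0)"
    and \<theta>d: "\<And>i. distr M borel (\<theta> i) = distr M borel (\<theta> 0)"
    and bnd: "measure M {\<omega> \<in> space M. c * \<theta> 0 \<omega> \<le> real m} = 1"
begin

definition "Z k \<omega> = (case k of Inl i \<Rightarrow> real (X i \<omega>) | Inr i \<Rightarrow> \<theta> i \<omega>)"
definition "sh k = (case k of Inl i \<Rightarrow> Inl (Suc i) | Inr i \<Rightarrow> Inr (Suc i :: nat))"
definition "Wf (z :: nat + nat \<Rightarrow> real) = max 0 (SUP n\<in>{1..}. ereal (\<Sum>i<n. z (Inl i) - c * z (Inr i)))"
definition "T \<omega> = Wf (\<lambda>k. Z (sh k) \<omega>)"

lemma indZ: "indep_vars (\<lambda>_. borel) Z UNIV"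
  using ind unfolding Z_def[abs_def] .

lemma Z_rv[measurable]: "Z k \<in> borel_measurable M"
  using indZ unfolding indep_vars_def by auto

lemma walk_Wf: "walk_sup X c \<theta> \<omega> = Wf (\<lambda>k. Z k \<omega>)"
  unfolding walk_sup_def Wf_def Z_def by simp

lemma Wf_meas[measurable]: "Wf \<in> borel_measurable (PiM UNIV (\<lambda>_. borel))"
  unfolding Wf_def by measurable

lemma inj_sh: "inj sh"
  unfolding sh_def inj_def by (auto split: sum.splits)

lemma distr_Z: "distr M borel (Z k) = distr M borel (Z (case k of Inl i \<Rightarrow> Inl 0 | Inr i \<Rightarrow> Inr 0))"
proof (cases k)
  case (Inl i)
  have r: "real \<in> measurable (count_space UNIV) borel" by (rule borel_measurable_count_space)
  have ZX: "Z (Inl j) = real \<circ> X j" for j unfolding Z_def by (rule ext) simp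
  have "distr M borel (Z k) = distr (distr M (count_space UNIV) (X i)) borel real"
    unfolding Inl ZX by (rule distr_distr[OF r Xm, symmetric])
  also have "\<dots> = distr (distr M (count_space UNIV) (X 0)) borel real" using Xd[of i] by (rule arg_cong)
  also have "\<dots> = distr M borel (Z (Inl 0))"
    unfolding ZX by (rule distr_distr[OF r Xm])
  finally show ?thesis using Inl by (simp del: Xd)
next
  case (Inr i)
  have "distr M borel (Z k) = distr M borel (\<theta> i)" unfolding Inr Z_def by simp
  also have "\<dots> = distr M borel (\<theta> 0)" by (rule \<theta>d)
  also have "\<dots> = distr M borel (Z (Inr 0))" unfolding Z_def by simp
  finally show ?thesis using Inr by simp
qed

lemma distr_shift:
  "distr M (PiM UNIV (\<lambda>_. borel)) (\<lambda>\<omega>. \<lambda>k\<in>UNIV. Z (sh k) \<omega>) = distr M (PiM UNIV (\<lambda>_. borel)) (\<lambda>\<omega>. \<lambda>k\<in>UNIV. Z k \<omega>)"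
proof -
  have iv: "indep_vars (\<lambda>_. borel) (\<lambda>k. Z (sh k)) UNIV"
    using indep_vars_reindex[OF indZ inj_sh] by simp
  have "distr M (PiM UNIV (\<lambda>_. borel)) (\<lambda>\<omega>. \<lambda>k\<in>UNIV. Z (sh k) \<omega>) = PiM UNIV (\<lambda>k. distr M borel (Z (sh k)))"
    using indep_vars_iff_distr_eq_PiM[where I=UNIV and M'="\<lambda>_. borel" and X="\<lambda>k. Z (sh k)"] iv by simp
  also have "\<dots> = PiM UNIV (\<lambda>k. distr M borel (Z k))"
  proof (rule PiM_cong)
    fix k :: "nat + nat"
    show "distr M borel (Z (sh k)) = distr M borel (Z k)"
      using distr_Z[of "sh k"] distr_Z[of k] by (simp add: sh_def split: sum.splits)
  qed simp
  also have "\<dots> = distr M (PiM UNIV (\<lambda>_. borel)) (\<lambda>\<omega>. \<lambda>k\<in>UNIV. Z k \<omega>)"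
    using indep_vars_iff_distr_eq_PiM[where I=UNIV and M'="\<lambda>_. borel" and X=Z] indZ by simp
  finally show ?thesis .
qed

lemma rUNIV: "restrict f UNIV = f" by (rule ext) simp

lemma m_sh: "(\<lambda>\<omega>. \<lambda>k\<in>UNIV. Z (sh k) \<omega>) \<in> measurable M (PiM UNIV (\<lambda>_. borel))"
  by (rule measurable_restrict) simp
lemma m_id: "(\<lambda>\<omega>. \<lambda>k\<in>UNIV. Z k \<omega>) \<in> measurable M (PiM UNIV (\<lambda>_. borel))"
  by (rule measurable_restrict) simp

lemma T_meas[measurable]: "T \<in> borel_measurable M"
proof -
  have "T = (\<lambda>\<omega>. Wf (\<lambda>k\<in>UNIV. Z (sh k) \<omega>))" unfolding T_def rUNIV ..
  then show ?thesis using measurable_compose[OF m_sh Wf_meas] by simp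
qed

lemma walk_meas[measurable]: "(\<lambda>\<omega>. walk_sup X c \<theta> \<omega>) \<in> borel_measurable M"
proof -
  have "(\<lambda>\<omega>. walk_sup X c \<theta> \<omega>) = (\<lambda>\<omega>. Wf (\<lambda>k\<in>UNIV. Z k \<omega>))" unfolding walk_Wf rUNIV ..
  then show ?thesis using measurable_compose[OF m_id Wf_meas] by simp
qed

lemma integral_T:
  fixes h :: "ereal \<Rightarrow> complex"
  assumes [measurable]: "h \<in> borel_measurable borel"
  shows "integral\<^sup>L M (\<lambda>\<omega>. h (T \<omega>)) = integral\<^sup>L M (\<lambda>\<omega>. h (walk_sup X c \<theta> \<omega>))"
proof -
  note m1 = m_sh and m2 = m_id
  have "integral\<^sup>L M (\<lambda>\<omega>. h (T \<omega>)) = integral\<^sup>L (distr M (PiM UNIV (\<lambda>_. borel)) (\<lambda>\<omega>. \<lambda>k\<in>UNIV. Z (sh k) \<omega>)) (\<lambda>z. h (Wf z))"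
    by (subst integral_distr[OF m1]) (auto simp: T_def rUNIV)
  also have "\<dots> = integral\<^sup>L (distr M (PiM UNIV (\<lambda>_. borel)) (\<lambda>\<omega>. \<lambda>k\<in>UNIV. Z k \<omega>)) (\<lambda>z. h (Wf z))"
    by (simp add: distr_shift)
  also have "\<dots> = integral\<^sup>L M (\<lambda>\<omega>. h (walk_sup X c \<theta> \<omega>))"
    by (subst integral_distr[OF m2]) (auto simp: walk_Wf rUNIV)
  finally show ?thesis .
qed

end


lemma (in prob_space) indep_prod_integral:
  fixes u v :: "_ \<Rightarrow> complex"
  assumes iv: "indep_var N1 Y1 N2 Y2" and [measurable]: "u \<in> borel_measurable N1" "v \<in> borel_measurable N2"
    and bu: "\<And>x. norm (u x) \<le> Cu" and bv: "\<And>x. norm (v x) \<le> Cv"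
  shows "(\<integral>\<omega>. u (Y1 \<omega>) * v (Y2 \<omega>) \<partial>M) = (\<integral>\<omega>. u (Y1 \<omega>) \<partial>M) * (\<integral>\<omega>. v (Y2 \<omega>) \<partial>M)"
proof -
  have iv2: "indep_var borel (u \<circ> Y1) borel (v \<circ> Y2)"
    by (rule indep_var_compose[OF iv]) simp_all
  have [measurable]: "Y1 \<in> measurable M N1" "Y2 \<in> measurable M N2"
    using indep_var_rv1[OF iv] indep_var_rv2[OF iv] by auto
  have i1: "integrable M (u \<circ> Y1)"
    by (rule integrable_const_bound[where B=Cu]) (auto simp: bu)
  have i2: "integrable M (v \<circ> Y2)"
    by (rule integrable_const_bound[where B=Cv]) (auto simp: bv)
  show ?thesis using indep_var_lebesgue_integral[OF iv2 i1 i2] by (simp add: comp_def)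
qed

context walk_setup
begin

definition "A0 = ({Inl 0, Inr 0} :: (nat + nat) set)"
definition "B0 = range sh"
definition "rA \<omega> = restrict (\<lambda>k. Z k \<omega>) A0"
definition "rB \<omega> = restrict (\<lambda>k. Z k \<omega>) B0"
definition "TB y = Wf (\<lambda>k. y (sh k))"

lemma indAB: "indep_var (PiM A0 (\<lambda>_. borel)) rA (PiM B0 (\<lambda>_. borel)) rB"
  unfolding rA_def[abs_def] rB_def[abs_def]
  by (rule indep_var_restrict[OF indZ]) (auto simp: A0_def B0_def sh_def split: sum.splits)

lemma TB_meas[measurable]: "TB \<in> borel_measurable (PiM B0 (\<lambda>_. borel))"
proof -
  have m: "(\<lambda>y. \<lambda>k\<in>UNIV. y (sh k)) \<in> measurable (PiM B0 (\<lambda>_. borel)) (PiM UNIV (\<lambda>_. borel :: real measure))"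
    by (rule measurable_restrict) (auto simp: B0_def intro!: measurable_component_singleton)
  have "TB = (\<lambda>y. Wf (\<lambda>k\<in>UNIV. y (sh k)))" unfolding TB_def[abs_def] rUNIV ..
  then show ?thesis using measurable_compose[OF m Wf_meas] by simp
qed

lemma T_TB: "T \<omega> = TB (rB \<omega>)"
  unfolding T_def TB_def rB_def B0_def by simp

lemma rA_simps: "rA \<omega> (Inl 0) = real (X 0 \<omega>)" "rA \<omega> (Inr 0) = \<theta> 0 \<omega>"
  unfolding rA_def A0_def Z_def by simp_all

lemma indX\<theta>: "indep_var borel (\<lambda>\<omega>. real (X 0 \<omega>)) borel (\<theta> 0)"
proof -
  have "indep_var (PiM {Inl 0} (\<lambda>_. borel)) (\<lambda>\<omega>. restrict (\<lambda>k. Z k \<omega>) {Inl 0})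
     (PiM {Inr 0} (\<lambda>_. borel)) (\<lambda>\<omega>. restrict (\<lambda>k. Z k \<omega>) {Inr 0})"
    by (rule indep_var_restrict[OF indZ]) auto
  then have "indep_var borel ((\<lambda>y. y (Inl 0)) \<circ> (\<lambda>\<omega>. restrict (\<lambda>k. Z k \<omega>) {Inl 0}))
     borel ((\<lambda>y. y (Inr 0)) \<circ> (\<lambda>\<omega>. restrict (\<lambda>k. Z k \<omega>) {Inr 0}))"
    by (rule indep_var_compose) (auto intro!: measurable_component_singleton)
  then show ?thesis by (simp add: comp_def Z_def)
qed

lemma Z_int: "\<omega> \<in> space M \<Longrightarrow> real (X i \<omega>) - c * \<theta> i \<omega> \<in> \<int>"
  using cnat[of \<omega> i] by (metis Ints_diff Ints_of_nat Nats_subset_Ints subsetD)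

lemma T_cases: assumes "\<omega> \<in> space M" shows "T \<omega> = \<infinity> \<or> (\<exists>i::nat. T \<omega> = ereal (real i))"
proof -
  define g where "g n = (\<Sum>i<n. real (X (Suc i) \<omega>) - c * \<theta> (Suc i) \<omega>)" for n
  have gi: "g n \<in> \<int>" for n unfolding g_def using Z_int[OF assms] by (intro Ints_sum) auto
  have Teq: "T \<omega> = max 0 (SUP n\<in>{1..}. ereal (g n))"
    unfolding T_def Wf_def g_def Z_def sh_def by simp
  from sup_ints[OF gi] show ?thesis
  proof
    assume "(SUP n\<in>{1..}. ereal (g n)) = \<infinity>" then show ?thesis using Teq by simp
  next
    assume "\<exists>k::int. (SUP n\<in>{1..}. ereal (g n)) = ereal (of_int k)"
    then obtain k :: int where k: "(SUP n\<in>{1..}. ereal (g n)) = ereal (of_int k)" by blast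
    have "T \<omega> = ereal (real (nat k))"
    proof (cases "k \<ge> 0")
      case True then show ?thesis using Teq k by (simp add: max_def)
    next
      case False then show ?thesis using Teq k by (simp add: max_def)
    qed
    then show ?thesis by blast
  qed
qed

lemma walk_T: "walk_sup X c \<theta> \<omega> = max 0 (ereal (real (X 0 \<omega>) - c * \<theta> 0 \<omega>) + T \<omega>)"
proof -
  have "walk_sup X c \<theta> \<omega> = max 0 (SUP n\<in>{1..}. ereal (\<Sum>i<n. real (X i \<omega>) - c * \<theta> i \<omega>))"
    unfolding walk_sup_def ..
  also have "(SUP n\<in>{1..}. ereal (\<Sum>i<n. real (X i \<omega>) - c * \<theta> i \<omega>)) =
     ereal (real (X 0 \<omega>) - c * \<theta> 0 \<omega>) + T \<omega>"
    using sup_shift[of "\<lambda>i. real (X i \<omega>) - c * \<theta> i \<omega>"]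
    unfolding T_def Wf_def Z_def sh_def by simp
  finally show ?thesis .
qed

end


lemma (in prob_space) pgf_integral:
  fixes g :: "'a \<Rightarrow> nat" and z :: complex
  assumes [measurable]: "g \<in> measurable M (count_space UNIV)"
    and sm: "summable (\<lambda>k. prob {\<omega>\<in>space M. g \<omega> = k} * cmod z ^ k)"
  shows "(\<lambda>k. complex_of_real (prob {\<omega>\<in>space M. g \<omega> = k}) * z ^ k) sums (\<integral>\<omega>. z ^ g \<omega> \<partial>M)"
proof -
  define f where "f k \<omega> = complex_of_real (indicator {\<omega>\<in>space M. g \<omega> = k} \<omega>) * z ^ k" for k \<omega>
  have ev[measurable]: "{\<omega>\<in>space M. g \<omega> = k} \<in> events" for k by measurable
  have ii: "integrable M (indicat_real {\<omega>\<in>space M. g \<omega> = k})" for k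
    by (rule integrable_const_bound[where B=1]) (auto split: split_indicator)
  have int: "integrable M (f k)" for k
    unfolding f_def by (intro integrable_mult_left integrable_of_real ii)
  have fin: "f k \<omega> = 0" if "k \<noteq> g \<omega>" for k \<omega> using that unfolding f_def by (auto split: split_indicator)
  have sumf: "(\<Sum>k. f k \<omega>) = z ^ g \<omega>" if "\<omega> \<in> space M" for \<omega>
  proof -
    have "(\<Sum>k. f k \<omega>) = (\<Sum>k\<in>{g \<omega>}. f k \<omega>)" by (rule suminf_finite) (auto simp: fin)
    then show ?thesis using that by (simp add: f_def)
  qed
  have intf: "integral\<^sup>L M (f k) = complex_of_real (prob {\<omega>\<in>space M. g \<omega> = k}) * z ^ k" for k
    unfolding f_def by (simp add: Int_absorb2 ev[THEN sets.sets_into_space])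
  have "(\<lambda>k. integral\<^sup>L M (f k)) sums (\<integral>\<omega>. (\<Sum>k. f k \<omega>) \<partial>M)"
  proof (rule sums_integral[OF int])
    show "AE x in M. summable (\<lambda>i. norm (f i x))"
    proof (rule AE_I2)
      fix x show "summable (\<lambda>i. norm (f i x))"
        by (rule summable_finite[of "{g x}"]) (auto simp: fin)
    qed
    have "(\<integral>x. norm (f i x) \<partial>M) = prob {\<omega>\<in>space M. g \<omega> = i} * cmod z ^ i" for i
    proof -
      have "(\<lambda>x. norm (f i x)) = (\<lambda>x. indicator {\<omega>\<in>space M. g \<omega> = i} x * cmod z ^ i)"
        unfolding f_def by (auto simp: norm_mult norm_power split: split_indicator)
      then show ?thesis by (simp add: Int_absorb2 ev[THEN sets.sets_into_space])
    qed
    then show "summable (\<lambda>i. \<integral>x. norm (f i x) \<partial>M)" using sm by simp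
  qed
  also have "(\<integral>\<omega>. (\<Sum>k. f k \<omega>) \<partial>M) = (\<integral>\<omega>. z ^ g \<omega> \<partial>M)"
    by (intro Bochner_Integration.integral_cong refl) (simp add: sumf)
  finally show ?thesis unfolding intf .
qed

context walk_setup
begin

lemma Xm'[measurable]: "X i \<in> measurable M (count_space UNIV)" by (rule Xm)
lemma \<theta>m'[measurable]: "\<theta> i \<in> borel_measurable M" by (rule \<theta>m)

definition "nN \<omega> = min m (nat \<lfloor>c * \<theta> 0 \<omega>\<rfloor>)"

lemma nN_meas[measurable]: "nN \<in> measurable M (count_space UNIV)"
  unfolding nN_def by measurable

lemma AE_bnd: "AE \<omega> in M. c * \<theta> 0 \<omega> \<le> real m"
  using AE_prob_1[OF bnd] by simp

lemma AE_nN: "AE \<omega> in M. c * \<theta> 0 \<omega> = real (nN \<omega>)"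
  using AE_bnd
proof (rule AE_mp[OF _ AE_I2[OF impI]])
  fix \<omega> assume \<omega>: "\<omega> \<in> space M" and le: "c * \<theta> 0 \<omega> \<le> real m"
  obtain n where n: "c * \<theta> 0 \<omega> = real n" using cnat[OF \<omega>, of 0] by (auto elim: Nats_cases)
  then show "c * \<theta> 0 \<omega> = real (nN \<omega>)" using le unfolding nN_def by simp
qed

lemma E_X: assumes "cmod s \<le> 1"
  shows "(\<integral>\<omega>. s ^ X 0 \<omega> \<partial>M) = pgf M (\<lambda>\<omega>. real (X 0 \<omega>)) s"
proof -
  have ps: "(\<lambda>k. prob {\<omega>\<in>space M. X 0 \<omega> = k}) sums prob {\<omega>\<in>space M. True}"
    by (rule prob_sums) (use Xm[of 0] in auto)
  have sm: "summable (\<lambda>k. prob {\<omega>\<in>space M. X 0 \<omega> = k} * cmod s ^ k)"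
  proof (rule summable_comparison_test[OF _ sums_summable[OF ps]])
    show "\<exists>N. \<forall>n\<ge>N. norm (prob {\<omega> \<in> space M. X 0 \<omega> = n} * cmod s ^ n) \<le> prob {\<omega> \<in> space M. X 0 \<omega> = n}"
      using assms by (auto intro!: exI[of _ 0] mult_left_le power_le_one)
  qed
  have "pgf M (\<lambda>\<omega>. real (X 0 \<omega>)) s = (\<Sum>k. complex_of_real (prob {\<omega>\<in>space M. X 0 \<omega> = k}) * s ^ k)"
    unfolding pgf_def by simp
  also have "\<dots> = (\<integral>\<omega>. s ^ X 0 \<omega> \<partial>M)"
    by (rule sums_unique[symmetric], rule pgf_integral[OF Xm sm])
  finally show ?thesis by simp
qed

lemma E_\<theta>: "(\<integral>\<omega>. z ^ nN \<omega> \<partial>M) = pgf M (\<lambda>\<omega>. c * \<theta> 0 \<omega>) z"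
proof -
  have sm: "summable (\<lambda>k. prob {\<omega>\<in>space M. nN \<omega> = k} * cmod z ^ k)"
  proof (rule summable_finite[of "{..m}"])
    fix k assume "k \<notin> {..m}"
    then have "{\<omega>\<in>space M. nN \<omega> = k} = {}" unfolding nN_def by auto
    then have "prob {\<omega>\<in>space M. nN \<omega> = k} = 0" by (simp only: measure_empty)
    then show "prob {\<omega>\<in>space M. nN \<omega> = k} * cmod z ^ k = 0" by simp
  qed simp
  have pe: "prob {\<omega>\<in>space M. c * \<theta> 0 \<omega> = real k} = prob {\<omega>\<in>space M. nN \<omega> = k}" for k
  proof (rule prob_eq_AE)
    show "AE \<omega> in M. (c * \<theta> 0 \<omega> = real k) \<longleftrightarrow> (nN \<omega> = k)"
      using AE_nN by eventually_elim auto
  qed measurable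
  have "pgf M (\<lambda>\<omega>. c * \<theta> 0 \<omega>) z = (\<Sum>k. complex_of_real (prob {\<omega>\<in>space M. nN \<omega> = k}) * z ^ k)"
    unfolding pgf_def pe ..
  also have "\<dots> = (\<integral>\<omega>. z ^ nN \<omega> \<partial>M)"
    by (rule sums_unique[symmetric], rule pgf_integral[OF nN_meas sm])
  finally show ?thesis by simp
qed

end


lemma psi_ind:
  fixes s :: complex and i t :: nat
  shows "(s - 1) * (\<Sum>j<n. if t \<le> j then s^(i+j) else 0) = (if t < n then s^(i+n) - s^(i+t) else 0)"
proof (induction n)
  case 0 then show ?case by simp
next
  case (Suc n)
  have e: "(s - 1) * s^(i+n) = s^(i + Suc n) - s^(i+n)" by (simp add: algebra_simps)
  show ?case
  proof (cases "t < n")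
    case True then show ?thesis using Suc e by (simp add: algebra_simps)
  next
    case False
    show ?thesis
    proof (cases "t = n")
      case True then show ?thesis using Suc e False by (simp add: algebra_simps)
    next
      case False2: False
      then show ?thesis using Suc False by (simp add: algebra_simps)
    qed
  qed
qed

lemma psi_tele:
  fixes s :: complex and i t m :: nat
  shows "(if i + t < m then s^m - s^(i+t) else 0) = (s - 1) * (\<Sum>j<m-i. if t \<le> j then s^(i+j) else 0)"
proof -
  have "(s - 1) * (\<Sum>j<m-i. if t \<le> j then s^(i+j) else 0) = (if t < m - i then s^(i+(m-i)) - s^(i+t) else 0)"
    by (rule psi_ind)
  moreover have "t < m - i \<longleftrightarrow> i + t < m" by auto
  moreover have "i + t < m \<Longrightarrow> i + (m - i) = m" by auto
  ultimately show ?thesis by auto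
qed

lemma rel_core:
  fixes s :: complex and i x n m :: nat
  assumes s: "s \<noteq> 0" and nm: "n \<le> m"
  shows "s^m * s^(nat (int x + int i - int n)) = s^m * (s^i * (s^x * (1/s)^n))
     + (if i < m then (if i + (x + (m - n)) < m then s^m - s^(i + (x+(m-n))) else 0) else 0)"
proof -
  have key: "s^m * (s^i * (s^x * (1/s)^n)) = s^(i + (x + (m-n)))"
  proof -
    have "s^m = s^n * s^(m-n)" using nm by (simp add: power_add[symmetric])
    then have "s^m * (s^i * (s^x * (1/s)^n)) = s^i * s^x * s^(m-n) * (s^n * (1/s)^n)" by (simp add: algebra_simps)
    also have "s^n * (1/s)^n = 1" using s by (simp add: power_mult_distrib[symmetric])
    finally show ?thesis by (simp add: power_add)
  qed
  show ?thesis
  proof (cases "n \<le> x + i")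
    case True
    then have "nat (int x + int i - int n) = x + i - n" by auto
    moreover have "m + (x + i - n) = i + (x + (m - n))" using True nm by auto
    moreover have "\<not> i + (x + (m - n)) < m" using True nm by auto
    ultimately show ?thesis using key by (simp add: power_add[symmetric])
  next
    case False
    then have "nat (int x + int i - int n) = 0" by auto
    moreover have "i + (x + (m - n)) < m" "i < m" using False nm by auto
    ultimately show ?thesis using key by simp
  qed
qed

context walk_setup
begin

definition "\<phi> s e = (if e = \<infinity> then 0 else (s::complex) ^ nat \<lfloor>real_of_ereal e\<rfloor>)"
definition "\<psi> s i t = (if i + t < m then (s::complex)^m - s^(i+t) else 0)"
definition "vB s y = (s::complex) ^ nat \<lfloor>y (Inl 0)\<rfloor> * (1/s)^(min m (nat \<lfloor>c * y (Inr 0)\<rfloor>))"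
definition "vP s i y = \<psi> s i (nat \<lfloor>y (Inl 0)\<rfloor> + (m - min m (nat \<lfloor>c * y (Inr 0)\<rfloor>)))"
definition "uI i y = (if TB y = ereal (real i) then 1 else (0::complex))"

lemma \<phi>_meas[measurable]: "\<phi> s \<in> borel_measurable borel"
  unfolding \<phi>_def[abs_def] by measurable

lemma \<phi>_bound: "cmod s \<le> 1 \<Longrightarrow> cmod (\<phi> s e) \<le> 1"
  unfolding \<phi>_def by (auto simp: norm_power power_le_one)

lemma vB_meas[measurable]: "vB s \<in> borel_measurable (PiM A0 (\<lambda>_. borel))"
  unfolding vB_def[abs_def] A0_def by measurable

lemma vP_meas[measurable]: "vP s i \<in> borel_measurable (PiM A0 (\<lambda>_. borel))"
  unfolding vP_def[abs_def] \<psi>_def A0_def by measurable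

lemma uI_meas[measurable]: "uI i \<in> borel_measurable (PiM B0 (\<lambda>_. borel))"
  unfolding uI_def[abs_def] by measurable

lemma pointwise:
  assumes s: "s \<noteq> 0" and \<omega>: "\<omega> \<in> space M" and cn: "c * \<theta> 0 \<omega> = real (nN \<omega>)"
  shows "s^m * \<phi> s (walk_sup X c \<theta> \<omega>) = s^m * (\<phi> s (TB (rB \<omega>)) * vB s (rA \<omega>))
    + (\<Sum>i<m. uI i (rB \<omega>) * vP s i (rA \<omega>))"
proof -
  have nm: "nN \<omega> \<le> m" unfolding nN_def by simp
  have vB: "vB s (rA \<omega>) = s ^ X 0 \<omega> * (1/s)^(nN \<omega>)"
    unfolding vB_def rA_simps nN_def by simp
  have vP: "vP s i (rA \<omega>) = \<psi> s i (X 0 \<omega> + (m - nN \<omega>))" for i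
    unfolding vP_def rA_simps nN_def by simp
  have wT: "walk_sup X c \<theta> \<omega> = max 0 (ereal (real (X 0 \<omega>) - real (nN \<omega>)) + T \<omega>)"
    unfolding walk_T cn ..
  from T_cases[OF \<omega>] show ?thesis
  proof
    assume Ti: "T \<omega> = \<infinity>"
    then show ?thesis using wT unfolding T_TB[symmetric] uI_def by (simp add: \<phi>_def)
  next
    assume "\<exists>i::nat. T \<omega> = ereal (real i)"
    then obtain i :: nat where Ti: "T \<omega> = ereal (real i)" by blast
    define x where "x = X 0 \<omega>"
    define n where "n = nN \<omega>"
    have "walk_sup X c \<theta> \<omega> = ereal (max 0 (real x - real n + real i))"
      using wT Ti unfolding x_def n_def by (simp add: max_def)
    moreover have "max 0 (real x - real n + real i) = real_of_int (max 0 (int x + int i - int n))" by simp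
    ultimately have f1: "\<phi> s (walk_sup X c \<theta> \<omega>) = s ^ nat (int x + int i - int n)"
      unfolding \<phi>_def by (simp only: real_of_ereal.simps floor_of_int) (simp add: max_def)
    have f2: "\<phi> s (TB (rB \<omega>)) = s ^ i" using Ti unfolding T_TB \<phi>_def by simp
    have f3: "(\<Sum>j<m. uI j (rB \<omega>) * vP s j (rA \<omega>)) = (if i < m then \<psi> s i (x + (m - n)) else 0)"
    proof -
      have "(\<Sum>j<m. uI j (rB \<omega>) * vP s j (rA \<omega>)) = (\<Sum>j<m. if i = j then \<psi> s j (x + (m - n)) else 0)"
        by (rule sum.cong) (auto simp: uI_def T_TB[symmetric] Ti vP x_def n_def)
      also have "\<dots> = (if i < m then \<psi> s i (x + (m - n)) else 0)" by (simp add: sum.delta)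
      finally show ?thesis .
    qed
    have f4: "vB s (rA \<omega>) = s ^ x * (1/s)^n" unfolding vB x_def n_def ..
    have rc: "s^m * s^(nat (int x + int i - int n)) = s^m * (s^i * (s^x * (1/s)^n))
     + (if i < m then (if i + (x + (m - n)) < m then s^m - s^(i + (x+(m-n))) else 0) else 0)"
      by (rule rel_core[OF s]) (simp add: n_def nm)
    show ?thesis unfolding f1 f2 f3 f4 \<psi>_def by (rule rc)
  qed
qed

end


context walk_setup
begin

lemma rA_meas[measurable]: "rA \<in> measurable M (PiM A0 (\<lambda>_. borel))"
  using indep_var_rv1[OF indAB] .
lemma rB_meas[measurable]: "rB \<in> measurable M (PiM B0 (\<lambda>_. borel))"
  using indep_var_rv2[OF indAB] .

lemma intb: "f \<in> borel_measurable M \<Longrightarrow> (\<And>x. norm (f x :: complex) \<le> B) \<Longrightarrow> integrable M f"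
  by (rule integrable_const_bound[where B=B]) auto

lemma bound_inv: assumes "s \<noteq> 0" "cmod s \<le> 1" "k \<le> m"
  shows "cmod ((1/s)^k) \<le> (1/cmod s)^m"
proof -
  have "1 \<le> 1 / cmod s" using assms by (simp add: field_simps)
  then have "(1/cmod s)^k \<le> (1/cmod s)^m" using assms(3) by (intro power_increasing)
  then show ?thesis by (simp add: norm_power norm_divide)
qed

lemma vB_bound: assumes "s \<noteq> 0" "cmod s \<le> 1" shows "cmod (vB s y) \<le> (1/cmod s)^m"
proof -
  have "cmod (vB s y) = cmod (s ^ nat \<lfloor>y (Inl 0)\<rfloor>) * cmod ((1/s)^(min m (nat \<lfloor>c * y (Inr 0)\<rfloor>)))"
    unfolding vB_def norm_mult ..
  also have "\<dots> \<le> 1 * (1/cmod s)^m"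
    using assms by (intro mult_mono bound_inv) (auto simp: norm_power power_le_one)
  finally show ?thesis by simp
qed

lemma psi_bound: assumes "cmod s \<le> 1" shows "cmod (\<psi> s i t) \<le> 2"
proof -
  have "cmod (s^m - s^(i+t)) \<le> cmod (s^m) + cmod (s^(i+t))" by (rule norm_triangle_ineq4)
  also have "\<dots> \<le> 1 + 1" using assms by (intro add_mono) (auto simp: norm_power power_le_one)
  finally show ?thesis unfolding \<psi>_def by auto
qed

lemma E_vB: assumes s: "s \<noteq> 0" "cmod s \<le> 1"
  shows "(\<integral>\<omega>. vB s (rA \<omega>) \<partial>M) = pgf M (\<lambda>\<omega>. real (X 0 \<omega>)) s * pgf M (\<lambda>\<omega>. c * \<theta> 0 \<omega>) (1/s)"
proof -
  define u where "u x = s ^ nat \<lfloor>x\<rfloor>" for x :: real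
  define v where "v x = (1/s) ^ (min m (nat \<lfloor>c * x\<rfloor>))" for x :: real
  have "(\<integral>\<omega>. vB s (rA \<omega>) \<partial>M) = (\<integral>\<omega>. u (real (X 0 \<omega>)) * v (\<theta> 0 \<omega>) \<partial>M)"
    unfolding vB_def rA_simps u_def v_def ..
  also have "\<dots> = (\<integral>\<omega>. u (real (X 0 \<omega>)) \<partial>M) * (\<integral>\<omega>. v (\<theta> 0 \<omega>) \<partial>M)"
  proof (rule indep_prod_integral[OF indX\<theta>])
    show "u \<in> borel_measurable borel" unfolding u_def[abs_def] by measurable
    show "v \<in> borel_measurable borel" unfolding v_def[abs_def] by measurable
    show "cmod (u x) \<le> 1" for x using s unfolding u_def by (simp add: norm_power power_le_one)
    show "cmod (v x) \<le> (1/cmod s)^m" for x unfolding v_def by (rule bound_inv[OF s]) simp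
  qed
  also have "(\<integral>\<omega>. u (real (X 0 \<omega>)) \<partial>M) = (\<integral>\<omega>. s ^ X 0 \<omega> \<partial>M)" unfolding u_def by simp
  also have "(\<integral>\<omega>. v (\<theta> 0 \<omega>) \<partial>M) = (\<integral>\<omega>. (1/s) ^ nN \<omega> \<partial>M)" unfolding v_def nN_def ..
  finally show ?thesis using E_X[OF s(2)] E_\<theta>[of "1/s"] by simp
qed

lemma E_uI: "(\<integral>\<omega>. uI i (rB \<omega>) \<partial>M) = complex_of_real (measure M {\<omega> \<in> space M. walk_sup X c \<theta> \<omega> = ereal (real i)})"
proof -
  define h where "h e = complex_of_real (indicator {ereal (real i)} e)" for e :: ereal
  have hm: "h \<in> borel_measurable borel" unfolding h_def[abs_def] by measurable
  have "(\<integral>\<omega>. uI i (rB \<omega>) \<partial>M) = (\<integral>\<omega>. h (T \<omega>) \<partial>M)"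
    unfolding uI_def h_def T_TB by (intro Bochner_Integration.integral_cong refl) (simp split: split_indicator)
  also have "\<dots> = (\<integral>\<omega>. h (walk_sup X c \<theta> \<omega>) \<partial>M)" by (rule integral_T[OF hm])
  also have "\<dots> = (\<integral>\<omega>. complex_of_real (indicator {\<omega> \<in> space M. walk_sup X c \<theta> \<omega> = ereal (real i)} \<omega>) \<partial>M)"
    unfolding h_def by (intro Bochner_Integration.integral_cong refl) (simp split: split_indicator)
  also have "\<dots> = complex_of_real (measure M {\<omega> \<in> space M. walk_sup X c \<theta> \<omega> = ereal (real i)})"
    by (simp add: Int_absorb2)
  finally show ?thesis .
qed

definition "tN \<omega> = X 0 \<omega> + (m - nN \<omega>)"

lemma tN_meas[measurable]: "tN \<in> measurable M (count_space UNIV)"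
  unfolding tN_def by measurable

lemma E_vP: assumes s: "cmod s \<le> 1"
  shows "(\<integral>\<omega>. vP s i (rA \<omega>) \<partial>M) = (s - 1) * (\<Sum>j<m-i. s^(i+j) *
     complex_of_real (measure M {\<omega> \<in> space M. real (X 0 \<omega>) - c * \<theta> 0 \<omega> \<le> real_of_int (- int m + int j)}))"
proof -
  have pe: "measure M {\<omega> \<in> space M. tN \<omega> \<le> j} =
      measure M {\<omega> \<in> space M. real (X 0 \<omega>) - c * \<theta> 0 \<omega> \<le> real_of_int (- int m + int j)}" for j
  proof (rule prob_eq_AE)
    show "AE \<omega> in M. (tN \<omega> \<le> j) \<longleftrightarrow> (real (X 0 \<omega>) - c * \<theta> 0 \<omega> \<le> real_of_int (- int m + int j))"
      using AE_nN
    proof eventually_elim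
      case (elim \<omega>)
      have "nN \<omega> \<le> m" unfolding nN_def by simp
      then show ?case unfolding tN_def elim by auto
    qed
  qed measurable
  have ij: "integrable M (\<lambda>\<omega>. complex_of_real (indicator {\<omega> \<in> space M. tN \<omega> \<le> j} \<omega>))" for j
    by (rule intb[where B=1]) (auto split: split_indicator)
  have "(\<integral>\<omega>. vP s i (rA \<omega>) \<partial>M) = (\<integral>\<omega>. (s - 1) * (\<Sum>j<m-i. s^(i+j) * complex_of_real (indicator {\<omega> \<in> space M. tN \<omega> \<le> j} \<omega>)) \<partial>M)"
  proof (intro Bochner_Integration.integral_cong refl)
    fix \<omega> assume \<omega>: "\<omega> \<in> space M"
    have "vP s i (rA \<omega>) = \<psi> s i (tN \<omega>)" unfolding vP_def rA_simps tN_def nN_def by simp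
    also have "\<dots> = (s - 1) * (\<Sum>j<m-i. if tN \<omega> \<le> j then s^(i+j) else 0)"
      unfolding \<psi>_def by (rule psi_tele)
    also have "\<dots> = (s - 1) * (\<Sum>j<m-i. s^(i+j) * complex_of_real (indicator {\<omega> \<in> space M. tN \<omega> \<le> j} \<omega>))"
      using \<omega> by (auto intro!: sum.cong split: split_indicator)
    finally show "vP s i (rA \<omega>) = \<dots>" .
  qed
  also have "\<dots> = (s - 1) * (\<Sum>j<m-i. s^(i+j) * complex_of_real (measure M {\<omega> \<in> space M. tN \<omega> \<le> j}))"
    using ij by (simp add: integral_sum Int_absorb2)
  finally show ?thesis unfolding pe .
qed

end


context walk_setup
begin

lemma main_identity:
  assumes s: "s \<noteq> 0" "cmod s \<le> 1"
  shows "(s - 1) * Ppoly m (\<lambda>i. measure M {\<omega>\<in>space M. walk_sup X c \<theta> \<omega> = ereal (real i)})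
      (\<lambda>j. measure M {\<omega>\<in>space M. real (X 0 \<omega>) - c * \<theta> 0 \<omega> \<le> real_of_int j}) s
   = s^m * (- (\<integral>\<omega>. \<phi> s (walk_sup X c \<theta> \<omega>) \<partial>M)) *
     (pgf M (\<lambda>\<omega>. real (X 0 \<omega>)) s * pgf M (\<lambda>\<omega>. c * \<theta> 0 \<omega>) (1/s) - 1)"
proof -
  define Q where "Q = (\<integral>\<omega>. \<phi> s (walk_sup X c \<theta> \<omega>) \<partial>M)"
  define H where "H = pgf M (\<lambda>\<omega>. real (X 0 \<omega>)) s * pgf M (\<lambda>\<omega>. c * \<theta> 0 \<omega>) (1/s)"
  define pc where "pc i = complex_of_real (measure M {\<omega>\<in>space M. walk_sup X c \<theta> \<omega> = ereal (real i)})" for i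
  define inner where "inner i = (\<Sum>j<m-i. s^(i+j) *
     complex_of_real (measure M {\<omega> \<in> space M. real (X 0 \<omega>) - c * \<theta> 0 \<omega> \<le> real_of_int (- int m + int j)}))" for i
  have i1: "integrable M (\<lambda>\<omega>. \<phi> s (TB (rB \<omega>)) * vB s (rA \<omega>))"
  proof (rule intb[where B="1 * (1/cmod s)^m"])
    fix x show "cmod (\<phi> s (TB (rB x)) * vB s (rA x)) \<le> 1 * (1/cmod s)^m"
      unfolding norm_mult by (rule mult_mono[OF \<phi>_bound[OF s(2)] vB_bound[OF s]]) simp_all
  qed measurable
  have i2: "integrable M (\<lambda>\<omega>. uI i (rB \<omega>) * vP s i (rA \<omega>))" for i
  proof (rule intb[where B="1 * 2"])
    fix x show "cmod (uI i (rB x) * vP s i (rA x)) \<le> 1 * 2"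
      unfolding norm_mult by (rule mult_mono) (auto simp: uI_def vP_def intro: psi_bound[OF s(2)])
  qed measurable
  have pieq: "(\<integral>\<omega>. uI i (rB \<omega>) * vP s i (rA \<omega>) \<partial>M) = (s - 1) * inner i * pc i" for i
  proof -
    have "(\<integral>\<omega>. uI i (rB \<omega>) * vP s i (rA \<omega>) \<partial>M) = (\<integral>\<omega>. vP s i (rA \<omega>) * uI i (rB \<omega>) \<partial>M)"
      by (simp add: mult.commute)
    also have "\<dots> = (\<integral>\<omega>. vP s i (rA \<omega>) \<partial>M) * (\<integral>\<omega>. uI i (rB \<omega>) \<partial>M)"
      by (rule indep_prod_integral[OF indAB vP_meas uI_meas, where Cu=2 and Cv=1])
         (auto simp: vP_def uI_def intro: psi_bound[OF s(2)])
    finally show ?thesis unfolding E_vP[OF s(2)] E_uI inner_def pc_def .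
  qed
  have "s^m * Q = (\<integral>\<omega>. s^m * \<phi> s (walk_sup X c \<theta> \<omega>) \<partial>M)" unfolding Q_def by simp
  also have "\<dots> = (\<integral>\<omega>. s^m * (\<phi> s (TB (rB \<omega>)) * vB s (rA \<omega>)) + (\<Sum>i<m. uI i (rB \<omega>) * vP s i (rA \<omega>)) \<partial>M)"
  proof (rule integral_cong_AE)
    show "AE \<omega> in M. s^m * \<phi> s (walk_sup X c \<theta> \<omega>) = s^m * (\<phi> s (TB (rB \<omega>)) * vB s (rA \<omega>)) + (\<Sum>i<m. uI i (rB \<omega>) * vP s i (rA \<omega>))"
      using AE_nN by (rule AE_mp) (auto intro!: AE_I2 pointwise[OF s(1)])
  qed measurable
  also have "\<dots> = s^m * (\<integral>\<omega>. \<phi> s (TB (rB \<omega>)) * vB s (rA \<omega>) \<partial>M) + (\<Sum>i<m. \<integral>\<omega>. uI i (rB \<omega>) * vP s i (rA \<omega>) \<partial>M)"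
    using i1 i2 by (simp add: integral_sum)
  also have "(\<integral>\<omega>. \<phi> s (TB (rB \<omega>)) * vB s (rA \<omega>) \<partial>M) = H * Q"
  proof -
    have "(\<integral>\<omega>. \<phi> s (TB (rB \<omega>)) * vB s (rA \<omega>) \<partial>M) = (\<integral>\<omega>. vB s (rA \<omega>) * (\<phi> s \<circ> TB) (rB \<omega>) \<partial>M)"
      by (simp add: mult.commute)
    also have "\<dots> = (\<integral>\<omega>. vB s (rA \<omega>) \<partial>M) * (\<integral>\<omega>. (\<phi> s \<circ> TB) (rB \<omega>) \<partial>M)"
      by (rule indep_prod_integral[OF indAB vB_meas _ vB_bound[OF s]]) (auto intro: \<phi>_bound[OF s(2)])
    also have "(\<integral>\<omega>. (\<phi> s \<circ> TB) (rB \<omega>) \<partial>M) = Q"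
      unfolding Q_def comp_def T_TB[symmetric] by (rule integral_T) measurable
    finally show ?thesis unfolding E_vB[OF s] H_def .
  qed
  also have "(\<Sum>i<m. \<integral>\<omega>. uI i (rB \<omega>) * vP s i (rA \<omega>) \<partial>M) = (\<Sum>i<m. (s - 1) * inner i * pc i)"
    by (simp add: pieq)
  finally have eq: "s^m * Q = s^m * (H * Q) + (\<Sum>i<m. (s - 1) * inner i * pc i)" .
  have "(s - 1) * Ppoly m (\<lambda>i. measure M {\<omega>\<in>space M. walk_sup X c \<theta> \<omega> = ereal (real i)})
      (\<lambda>j. measure M {\<omega>\<in>space M. real (X 0 \<omega>) - c * \<theta> 0 \<omega> \<le> real_of_int j}) s
      = (\<Sum>i<m. (s - 1) * inner i * pc i)"
    unfolding Ppoly_def inner_def pc_def sum_distrib_left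
    by (intro sum.cong refl) (simp add: algebra_simps sum_distrib_left)
  also have "\<dots> = s^m * Q - s^m * (H * Q)" using eq by simp
  finally show ?thesis unfolding Q_def[symmetric] H_def[symmetric] by (simp add: algebra_simps)
qed

lemma Q_bound: assumes "cmod s \<le> 1" shows "cmod (\<integral>\<omega>. \<phi> s (walk_sup X c \<theta> \<omega>) \<partial>M) \<le> 1"
proof -
  have int: "integrable M (\<lambda>\<omega>. \<phi> s (walk_sup X c \<theta> \<omega>))"
    by (rule intb[where B=1]) (auto intro: \<phi>_bound[OF assms])
  have "cmod (\<integral>\<omega>. \<phi> s (walk_sup X c \<theta> \<omega>) \<partial>M) \<le> (\<integral>\<omega>. cmod (\<phi> s (walk_sup X c \<theta> \<omega>)) \<partial>M)"
    by (rule integral_norm_bound)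
  also have "\<dots> \<le> (\<integral>\<omega>. 1 \<partial>M)"
    using int by (intro integral_mono) (auto intro: \<phi>_bound[OF assms])
  finally show ?thesis by (simp add: prob_space)
qed

end


lemma Ppoly_holo: "Ppoly m p F holomorphic_on UNIV"
  unfolding Ppoly_def[abs_def] by (intro holomorphic_intros)

theorem corollary2p4:
  fixes M :: "'a measure" and X :: "nat \<Rightarrow> 'a \<Rightarrow> nat" and \<theta> :: "nat \<Rightarrow> 'a \<Rightarrow> real"
    and c :: real and m :: nat and \<alpha> :: complex and r :: nat
  assumes "prob_space M"
    and "\<And>i. X i \<in> measurable M (count_space UNIV)"
    and "\<And>i. \<theta> i \<in> borel_measurable M"
    and "c > 0"
    and "\<And>i \<omega>. \<omega> \<in> space M \<Longrightarrow> c * \<theta> i \<omega> \<in> \<nat>"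
    and "prob_space.indep_vars M (\<lambda>_. borel)
           (\<lambda>k \<omega>. case k of Inl i \<Rightarrow> real (X i \<omega>) | Inr i \<Rightarrow> \<theta> i \<omega>) UNIV"
    and "\<And>i. distr M (count_space UNIV) (X i) = distr M (count_space UNIV) (X 0)"
    and "\<And>i. distr M borel (\<theta> i) = distr M borel (\<theta> 0)"
    and "measure M {\<omega> \<in> space M. c * \<theta> 0 \<omega> \<le> real m} = 1"
    and "integrable M (\<lambda>\<omega>. real (X 0 \<omega>))"
    and "c * prob_space.expectation M (\<theta> 0) - prob_space.expectation M (\<lambda>\<omega>. real (X 0 \<omega>)) > 0"
    and "cmod \<alpha> \<le> 1" and "\<alpha> \<noteq> 0" and "\<alpha> \<noteq> 1"
    and "pgf M (\<lambda>\<omega>. real (X 0 \<omega>)) \<alpha> * pgf M (\<lambda>\<omega>. c * \<theta> 0 \<omega>) (1 / \<alpha>) = 1"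
  defines "\<pi> \<equiv> \<lambda>i::nat. measure M {\<omega> \<in> space M. walk_sup X c \<theta> \<omega> = ereal (real i)}"
    and "F \<equiv> \<lambda>j::int. measure M {\<omega> \<in> space M. real (X 0 \<omega>) - c * \<theta> 0 \<omega> \<le> real_of_int j}"
  shows "Ppoly m \<pi> F \<alpha> = 0 \<and>
    ((r \<in> {1..m-1} \<and>
      root_multiplicity_disc
        (\<lambda>s. pgf M (\<lambda>\<omega>. real (X 0 \<omega>)) s * pgf M (\<lambda>\<omega>. c * \<theta> 0 \<omega>) (1 / s) - 1) \<alpha> r)
     \<longrightarrow> (\<forall>n<r. (deriv ^^ n) (Ppoly m \<pi> F) \<alpha> = 0))"
proof -
  interpret ws: walk_setup M X \<theta> c m
    using assms(1-9) unfolding walk_setup_def walk_setup_axioms_def by auto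
  define Q where "Q s = - (\<integral>\<omega>. ws.\<phi> s (walk_sup X c \<theta> \<omega>) \<partial>M)" for s
  define f where "f s = pgf M (\<lambda>\<omega>. real (X 0 \<omega>)) s * pgf M (\<lambda>\<omega>. c * \<theta> 0 \<omega>) (1 / s) - 1" for s
  have eq: "(s - 1) * Ppoly m \<pi> F s = s^m * Q s * f s" if "s \<noteq> 0" "cmod s \<le> 1" for s
    unfolding \<pi>_def F_def Q_def f_def using ws.main_identity[OF that] by simp
  have Qb: "cmod (Q s) \<le> 1" if "s \<noteq> 0" "cmod s \<le> 1" for s
    unfolding Q_def using ws.Q_bound[OF that(2)] by simp
  have f0: "f \<alpha> = 0" unfolding f_def using assms(15) by simp
  have "(\<alpha> - 1) * Ppoly m \<pi> F \<alpha> = 0" using eq[OF assms(13,12)] f0 by simp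
  then have P0: "Ppoly m \<pi> F \<alpha> = 0" using assms(14) by simp
  show ?thesis
  proof (intro conjI impI P0)
    assume "r \<in> {1..m-1} \<and> root_multiplicity_disc
        (\<lambda>s. pgf M (\<lambda>\<omega>. real (X 0 \<omega>)) s * pgf M (\<lambda>\<omega>. c * \<theta> 0 \<omega>) (1 / s) - 1) \<alpha> r"
    then have rm: "root_multiplicity_disc f \<alpha> r" unfolding f_def[abs_def] by simp
    show "\<forall>n<r. (deriv ^^ n) (Ppoly m \<pi> F) \<alpha> = 0"
      by (rule analytic_part[OF Ppoly_holo eq Qb assms(12,13,14) rm P0])
  qed
qed


end
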